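(* Let $(\lambda_k)_{k\ge1}$, $(\mu_k)_{k\ge1}$ be nonzero real numbers with $|\lambda_1|>|\mu_1|>|\lambda_2|>|\mu_2|>\dots>0$ and $\lambda_k\to0$. Then $$\lim_{N\to\infty}\frac{1}{\lambda_N^2}\prod_{k=1}^\infty\frac{\lambda_N^2+\mu_k^2}{\lambda_N^2+\lambda_k^2}=\infty$$ if and only if $$\sum_{k\ge1}\Big(\frac{\mu_k^2}{\lambda_{k+1}^2}-1\Big)=\infty.$$ *)

theory Defs
  imports "HOL-Analysis.Analysis"
begin

end

theory Submission
  imports Defs
begin

lemma prod_ge_1_plus_sum:
  fixes t :: "nat \<Rightarrow> real"
  assumes "\<And>k. t k \<ge> 0"
  shows "(\<Prod>k<n. 1 + t k) \<ge> 1 + (\<Sum>k<n. t k)"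
proof (induction n)
  case 0 then show ?case by simp
next
  case (Suc n)
  have s: "(\<Sum>k<n. t k) \<ge> 0" using assms by (simp add: sum_nonneg)
  have "(\<Prod>k<Suc n. 1 + t k) = (\<Prod>k<n. 1 + t k) * (1 + t n)" by simp
  also have "\<dots> \<ge> (1 + (\<Sum>k<n. t k)) * (1 + t n)"
    using Suc assms[of n] by (intro mult_right_mono) auto
  also have "(1 + (\<Sum>k<n. t k)) * (1 + t n) \<ge> 1 + (\<Sum>k<Suc n. t k)"
    using s assms[of n] by (simp add: algebra_simps)
  finally show ?case by linarith
qed

lemma prod_ident:
  fixes a b :: "nat \<Rightarrow> real"
  assumes "x > 0" "\<And>k. a k > 0"
  shows "(\<Prod>k<M. (x + b k) / (x + a k)) = (x + a M) / (x + a 0) * (\<Prod>k<M. (x + b k) / (x + a (Suc k)))"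
proof (induction M)
  case 0
  have "x + a 0 > 0" using assms(1) assms(2)[of 0] by linarith
  then show ?case by simp
next
  case (Suc M)
  have p: "x + a M \<noteq> 0" "x + a (Suc M) \<noteq> 0" "x + a 0 \<noteq> 0" using assms(1) assms(2)[of M] assms(2)[of "Suc M"] assms(2)[of 0] by linarith+
  define q where "q = (\<Prod>k<M. (x + b k) / (x + a (Suc k)))"
  have "(\<Prod>k<Suc M. (x + b k) / (x + a k)) = (\<Prod>k<M. (x + b k) / (x + a k)) * ((x + b M) / (x + a M))" by simp
  also have "\<dots> = (x + a M) / (x + a 0) * q * ((x + b M) / (x + a M))" using Suc.IH q_def by simp
  also have "\<dots> = (x + b M) / (x + a 0) * q" using p(1) by simp
  also have "\<dots> = (x + a (Suc M)) / (x + a 0) * (q * ((x + b M) / (x + a (Suc M))))" using p(2) by simp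
  also have "\<dots> = (x + a (Suc M)) / (x + a 0) * (\<Prod>k<Suc M. (x + b k) / (x + a (Suc k)))" using q_def by simp
  finally show ?case .
qed

lemma main_generic:
  fixes a b :: "nat \<Rightarrow> real"
  assumes apos: "\<And>k. a k > 0"
    and ab: "\<And>k. b k < a k" and ba: "\<And>k. a (Suc k) < b k"
    and alim: "a \<longlonglongrightarrow> 0"
  shows "filterlim (\<lambda>N. (1 / a N) * (\<Prod>k. (a N + b k) / (a N + a k))) at_top sequentially
     \<longleftrightarrow> filterlim (\<lambda>n. \<Sum>k<n. b k / a (Suc k) - 1) at_top sequentially"
proof -
  define f where "f x k = (x + b k) / (x + a k)" for x k
  define S where "S n = (\<Sum>k<n. b k / a (Suc k) - 1)" for n
  have bpos: "b k > 0" for k using apos[of "Suc k"] ba[of k] by linarith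
  have anti: "a n \<le> a m" if "m \<le> n" for m n
    using lift_Suc_antimono_le[of a m n] that ab ba
    by (metis less_imp_le order.strict_trans)
  have a0: "a n \<le> a 0" for n using anti[of 0 n] by simp
  have rge: "b k / a (Suc k) - 1 \<ge> 0" for k using ba[of k] apos[of "Suc k"] by (simp add: field_simps)
  have Smono: "S m \<le> S n" if "m \<le> n" for m n
    unfolding S_def using that rge by (intro sum_mono2) auto
  have Snn: "S n \<ge> 0" for n unfolding S_def using rge by (simp add: sum_nonneg)
  have conv: "convergent_prod (f x)" if x: "x > 0" for x
  proof -
    have "summable (\<lambda>k. (a k - a (Suc k)) / x)"
      using telescope_summable'[OF alim] by (intro summable_divide)
    then have "summable (\<lambda>k. norm (f x k - 1))"
    proof (rule summable_comparison_test[rotated])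
      show "\<exists>N. \<forall>n\<ge>N. norm (norm (f x n - 1)) \<le> (a n - a (Suc n)) / x"
      proof (intro exI allI impI)
        fix n
        have xa: "x + a n > 0" using x apos[of n] by linarith
        have "f x n - 1 = (b n - a n) / (x + a n)" unfolding f_def using xa by (simp add: field_simps)
        then have "norm (norm (f x n - 1)) = (a n - b n) / (x + a n)" using ab[of n] xa by simp
        also have "\<dots> \<le> (a n - b n) / x" using ab[of n] xa x apos[of n]
          by (intro divide_left_mono) auto
        also have "\<dots> \<le> (a n - a (Suc n)) / x" using ba[of n] x by (intro divide_right_mono) auto
        finally show "norm (norm (f x n - 1)) \<le> (a n - a (Suc n)) / x" .
      qed
    qed
    then show ?thesis
      by (intro abs_convergent_prod_imp_convergent_prod) (simp add: abs_convergent_prod_conv_summable)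
  qed
  have lim: "(\<lambda>n. \<Prod>k<Suc n. f x k) \<longlonglongrightarrow> prodinf (f x)" if "x > 0" for x
    using convergent_prod_LIMSEQ[OF conv[OF that]] by (simp add: lessThan_Suc_atMost)
  have limr: "(\<lambda>n. (x + a (Suc n)) / (x + a 0) * c) \<longlonglongrightarrow> x / (x + a 0) * c" if x0: "x > 0" for x c
  proof -
    have "x + a 0 \<noteq> 0" using x0 apos[of 0] by linarith
    have "(\<lambda>n. a (Suc n)) \<longlonglongrightarrow> 0" using alim by (rule LIMSEQ_Suc)
    then have "(\<lambda>n. x + a (Suc n)) \<longlonglongrightarrow> x + 0" by (intro tendsto_add tendsto_const)
    then have "(\<lambda>n. (x + a (Suc n)) / (x + a 0)) \<longlonglongrightarrow> (x + 0) / (x + a 0)"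
      using \<open>x + a 0 \<noteq> 0\<close> by (intro tendsto_divide tendsto_const)
    then show ?thesis by (intro tendsto_mult tendsto_const) simp
  qed
  have upper: "(\<Prod>k<M. f x k) \<le> (x + a M) / (x + a 0) * exp (S M)" if x: "x > 0" for x M
  proof -
    have "(\<Prod>k<M. (x + b k) / (x + a (Suc k))) \<le> (\<Prod>k<M. exp (b k / a (Suc k) - 1))"
    proof (intro prod_mono conjI)
      fix k
      have p: "x + a (Suc k) > 0" using x apos[of "Suc k"] by linarith
      show "0 \<le> (x + b k) / (x + a (Suc k))" using p x bpos[of k] by simp
      have "(x + b k) / (x + a (Suc k)) \<le> b k / a (Suc k)"
        using p apos[of "Suc k"] ba[of k] x by (simp add: field_simps mult_left_mono)
      also have "\<dots> \<le> exp (b k / a (Suc k) - 1)" using exp_ge_add_one_self[of "b k / a (Suc k) - 1"] by simp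
      finally show "(x + b k) / (x + a (Suc k)) \<le> exp (b k / a (Suc k) - 1)" .
    qed
    also have "\<dots> = exp (S M)" unfolding S_def by (simp add: exp_sum)
    finally have q: "(\<Prod>k<M. (x + b k) / (x + a (Suc k))) \<le> exp (S M)" .
    have c: "(x + a M) / (x + a 0) \<ge> 0" using x apos[of M] apos[of 0] by simp
    have e: "(\<Prod>k<M. f x k) = (x + a M) / (x + a 0) * (\<Prod>k<M. (x + b k) / (x + a (Suc k)))"
      unfolding f_def by (rule prod_ident[OF x apos])
    show ?thesis unfolding e by (rule mult_left_mono[OF q c])
  qed
  have lower: "(\<Prod>k<M. f (a N) k) \<ge> a N / (a N + a 0) * (1 + S N / 2)" if "N \<le> M" for N M
  proof -
    define x where "x = a N"
    have x: "x > 0" unfolding x_def by (rule apos)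
    have fac1: "(x + b k) / (x + a (Suc k)) \<ge> 1" for k
      using x apos[of "Suc k"] ba[of k] by simp
    have "(\<Prod>k<N. 1 + (b k / a (Suc k) - 1) / 2) \<le> (\<Prod>k<N. (x + b k) / (x + a (Suc k)))"
    proof (intro prod_mono conjI)
      fix k assume "k \<in> {..<N}"
      then have xa: "x \<le> a (Suc k)" unfolding x_def by (intro anti) auto
      have ak: "a (Suc k) > 0" by (rule apos)
      have bk: "b k > a (Suc k)" by (rule ba)
      show "0 \<le> 1 + (b k / a (Suc k) - 1) / 2" using rge[of k] by simp
      have "1 + (b k / a (Suc k) - 1) / 2 = (a (Suc k) + b k) / (2 * a (Suc k))"
        using ak by (simp add: field_simps)
      also have "\<dots> \<le> (x + b k) / (x + a (Suc k))"
      proof -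
        have "(a (Suc k) - x) * (b k - a (Suc k)) \<ge> 0" using xa bk by simp
        then have "(a (Suc k) + b k) * (x + a (Suc k)) \<le> (x + b k) * (2 * a (Suc k))"
          by (simp add: algebra_simps)
        then show ?thesis using ak x by (simp add: divide_simps)
      qed
      finally show "1 + (b k / a (Suc k) - 1) / 2 \<le> (x + b k) / (x + a (Suc k))" .
    qed
    moreover have "(\<Prod>k<N. 1 + (b k / a (Suc k) - 1) / 2) \<ge> 1 + (\<Sum>k<N. (b k / a (Suc k) - 1) / 2)"
      using rge by (intro prod_ge_1_plus_sum) simp
    moreover have "(\<Sum>k<N. (b k / a (Suc k) - 1) / 2) = S N / 2"
      unfolding S_def by (simp add: sum_divide_distrib)
    moreover have "(\<Prod>k<N. (x + b k) / (x + a (Suc k))) \<le> (\<Prod>k<M. (x + b k) / (x + a (Suc k)))"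
    proof -
      have "{..<M} = {..<N} \<union> {N..<M}" using that by auto
      then have "(\<Prod>k<M. (x + b k) / (x + a (Suc k))) =
          (\<Prod>k<N. (x + b k) / (x + a (Suc k))) * (\<Prod>k\<in>{N..<M}. (x + b k) / (x + a (Suc k)))"
        using prod.atLeastLessThan_concat[of 0 N M "\<lambda>k. (x + b k) / (x + a (Suc k))"] that
        by (simp add: atLeast0LessThan)
      moreover have R: "(\<Prod>k\<in>{N..<M}. (x + b k) / (x + a (Suc k))) \<ge> 1"
        using fac1 by (intro prod_ge_1) (auto simp del: le_divide_eq_1_pos)
      moreover have P0: "(\<Prod>k<N. (x + b k) / (x + a (Suc k))) \<ge> 0"
        using fac1 by (intro prod_nonneg) (meson order.trans zero_le_one)
      moreover have "(\<Prod>k<N. (x + b k) / (x + a (Suc k))) * 1 \<le> (\<Prod>k<N. (x + b k) / (x + a (Suc k))) * (\<Prod>k\<in>{N..<M}. (x + b k) / (x + a (Suc k)))"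
        by (rule mult_left_mono[OF R P0])
      ultimately show ?thesis by simp
    qed
    ultimately have q: "(\<Prod>k<M. (x + b k) / (x + a (Suc k))) \<ge> 1 + S N / 2" by linarith
    have c: "x / (x + a 0) \<le> (x + a M) / (x + a 0)" using x apos[of M] apos[of 0]
      by (intro divide_right_mono) auto
    have c0: "x / (x + a 0) \<ge> 0" using x apos[of 0] by simp
    have "x / (x + a 0) * (1 + S N / 2) \<le> (x + a M) / (x + a 0) * (1 + S N / 2)"
      using c Snn[of N] by (intro mult_right_mono) auto
    also have "\<dots> \<le> (x + a M) / (x + a 0) * (\<Prod>k<M. (x + b k) / (x + a (Suc k)))"
      using q c c0 by (intro mult_left_mono) auto
    finally have fin: "x / (x + a 0) * (1 + S N / 2) \<le> (x + a M) / (x + a 0) * (\<Prod>k<M. (x + b k) / (x + a (Suc k)))" .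
    have e: "(\<Prod>k<M. f x k) = (x + a M) / (x + a 0) * (\<Prod>k<M. (x + b k) / (x + a (Suc k)))"
      unfolding f_def by (rule prod_ident[OF x apos])
    show ?thesis using fin unfolding e[symmetric] by (simp add: x_def)
  qed
  have Pfold: "(\<Prod>k. (a N + b k) / (a N + a k)) = prodinf (f (a N))" for N
    unfolding f_def ..
  have Plow: "(1 / a N) * prodinf (f (a N)) \<ge> S N / (4 * a 0)" for N
  proof -
    have "prodinf (f (a N)) \<ge> a N / (a N + a 0) * (1 + S N / 2)"
      by (rule LIMSEQ_le_const[OF lim[OF apos]]) (use lower[of N "Suc _"] in \<open>auto intro!: exI[of _ N] simp del: prod.lessThan_Suc\<close>)
    then have "(1 / a N) * prodinf (f (a N)) \<ge> (1 / a N) * (a N / (a N + a 0) * (1 + S N / 2))"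
      using apos[of N] by (intro mult_left_mono) auto
    moreover have "(1 / a N) * (a N / (a N + a 0) * (1 + S N / 2)) = (1 + S N / 2) / (a N + a 0)"
    proof -
      have "a N + a 0 \<noteq> 0" "a N \<noteq> 0" using apos[of N] apos[of 0] by linarith+
      then show ?thesis by simp
    qed
    moreover have "(1 + S N / 2) / (a N + a 0) \<ge> (1 + S N / 2) / (2 * a 0)"
      using apos[of N] apos[of 0] a0[of N] Snn[of N] by (intro divide_left_mono) auto
    moreover have "(1 + S N / 2) / (2 * a 0) \<ge> S N / (4 * a 0)"
      using apos[of 0] Snn[of N] by (simp add: field_simps)
    ultimately show ?thesis by linarith
  qed
  show ?thesis unfolding Pfold S_def[symmetric]
  proof
    assume L: "filterlim (\<lambda>N. 1 / a N * prodinf (f (a N))) at_top sequentially"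
    show "filterlim S at_top sequentially"
      unfolding filterlim_at_top
    proof
      fix Z
      have "eventually (\<lambda>N. exp Z / a 0 + 1 \<le> 1 / a N * prodinf (f (a N))) sequentially"
        using L unfolding filterlim_at_top by blast
      then obtain N where N: "exp Z / a 0 + 1 \<le> 1 / a N * prodinf (f (a N))"
        unfolding eventually_sequentially by auto
      have "\<exists>M. Z \<le> S M"
      proof (rule ccontr)
        assume "\<not> ?thesis"
        then have SZ: "S M \<le> Z" for M by (meson not_le less_imp_le)
        define x where "x = a N"
        have x: "x > 0" unfolding x_def by (rule apos)
        have "prodinf (f x) \<le> x / (x + a 0) * exp Z"
        proof (rule LIMSEQ_le[OF lim[OF x] limr[of x "exp Z", OF x]])
          show "\<exists>N. \<forall>n\<ge>N. (\<Prod>k<Suc n. f x k) \<le> (x + a (Suc n)) / (x + a 0) * exp Z"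
          proof (intro exI allI impI)
            fix n
            have "(\<Prod>k<Suc n. f x k) \<le> (x + a (Suc n)) / (x + a 0) * exp (S (Suc n))"
              by (rule upper[OF x])
            also have "\<dots> \<le> (x + a (Suc n)) / (x + a 0) * exp Z"
              using SZ[of "Suc n"] x apos[of "Suc n"] apos[of 0]
              by (intro mult_left_mono) auto
            finally show "(\<Prod>k<Suc n. f x k) \<le> (x + a (Suc n)) / (x + a 0) * exp Z" .
          qed
        qed
        then have "1 / x * prodinf (f x) \<le> 1 / x * (x / (x + a 0) * exp Z)"
          using x by (intro mult_left_mono) auto
        also have "\<dots> = exp Z / (x + a 0)" using x apos[of 0] by (simp add: field_simps)
        also have "\<dots> \<le> exp Z / a 0" using x apos[of 0] by (intro divide_left_mono) auto
        finally show False using N unfolding x_def by linarith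
      qed
      then obtain M where "Z \<le> S M" by blast
      then show "eventually (\<lambda>n. Z \<le> S n) sequentially"
        unfolding eventually_sequentially using Smono by (meson order.trans)
    qed
  next
    assume R: "filterlim S at_top sequentially"
    show "filterlim (\<lambda>N. 1 / a N * prodinf (f (a N))) at_top sequentially"
      unfolding filterlim_at_top
    proof
      fix Z
      have "eventually (\<lambda>N. Z * (4 * a 0) \<le> S N) sequentially"
        using R unfolding filterlim_at_top by blast
      then show "eventually (\<lambda>N. Z \<le> 1 / a N * prodinf (f (a N))) sequentially"
      proof (rule eventually_mono)
        fix N assume "Z * (4 * a 0) \<le> S N"
        then have "Z \<le> S N / (4 * a 0)" using apos[of 0] by (simp add: field_simps)
        then show "Z \<le> 1 / a N * prodinf (f (a N))" using Plow[of N] by linarith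
      qed
    qed
  qed
qed

theorem lemma4p8:
  fixes lam mu :: "nat \<Rightarrow> real"
  assumes nz: "\<And>k. lam k \<noteq> 0" "\<And>k. mu k \<noteq> 0"
    and interlace: "\<And>k. \<bar>lam k\<bar> > \<bar>mu k\<bar> \<and> \<bar>mu k\<bar> > \<bar>lam (Suc k)\<bar>"
    and lim0: "lam \<longlonglongrightarrow> 0"
  shows "filterlim (\<lambda>N. (1 / (lam N)^2) *
            (\<Prod>k. ((lam N)^2 + (mu k)^2) / ((lam N)^2 + (lam k)^2))) at_top sequentially
     \<longleftrightarrow> filterlim (\<lambda>n. \<Sum>k<n. (mu k)^2 / (lam (Suc k))^2 - 1) at_top sequentially"
proof -
  have sq: "x\<^sup>2 < y\<^sup>2" if "\<bar>x\<bar> < \<bar>y\<bar>" for x y :: real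
    using that by (metis abs_ge_zero power2_abs power_strict_mono zero_less_numeral)
  have A: "\<And>k. (lam k)^2 > 0" using nz by simp
  have B: "\<And>k. (mu k)^2 < (lam k)^2" using interlace sq by blast
  have C: "\<And>k. (lam (Suc k))^2 < (mu k)^2" using interlace sq by blast
  have D: "(\<lambda>k. (lam k)^2) \<longlonglongrightarrow> 0" using tendsto_power[OF lim0, of 2] by simp
  show ?thesis using main_generic[of "\<lambda>k. (lam k)^2" "\<lambda>k. (mu k)^2", OF A B C D] by simp
qed

end
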